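(* Let $\mathbf{x_0}=(x_1,\dots,x_m)\in \mathbb{R}^m$ and let $m_1,\dots,m_n\in\mathbb{N}$ with $m=\sum_{i=1}^n m_i$. Set $s_0=0$ and $s_k=\sum_{i=1}^k m_i$ for $1\le k\le n$. Let $p,p_1,\dots,p_n\in(1,\infty)$ with conjugate exponents $q,q_1,\dots,q_n$ (i.e. $1/p+1/q=1$, $1/p_k+1/q_k=1$). Let $\mathbf{a}=(a_1,\dots,a_m)\in \mathbb{R}^m\setminus \{\theta\}$ and $W=\{(z_1,\dots,z_m)\in \mathbb{R}^m: \sum_{i=1}^m a_iz_i=0\}$. Then for all $(b_1,\dots,b_m)\in W\setminus \{\theta\}$ and all $\lambda \in \mathbb{R}$, $$\Bigg(\sum_{k=1}^n\Big(\sum_{j=s_{k-1}+1}^{s_k}|x_j-\lambda a_j|^{p_k}\Big)^{p/p_k}\Bigg)^{1/p}\Bigg(\sum_{k=1}^n\Big(\sum_{j=s_{k-1}+1}^{s_k}|b_j|^{q_k}\Big)^{q/q_k}\Bigg)^{1/q}\ge \Big| \sum_{j=1}^m x_jb_j\Big|.$$ Moreover, the inequality is optimal: if $W\neq\{\theta\}$, then the minimum over $\lambda\in\mathbb{R}$ of the first factor equals the maximum over $(b_1,\dots,b_m)\in W\setminus\{\theta\}$ of $\big|\sum_j x_jb_j\big|$ divided by the second factor.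
   Context: $\theta$ denotes the zero vector of $\mathbb{R}^m$. *)

theory Defs
  imports Complex_Main
begin

text \<open>Vectors in R^m are represented as functions nat \<Rightarrow> real, using the indices 1..m.
  The block structure is given by block sizes ms 1, ..., ms n; blk_s ms k = ms 1 + ... + ms k.\<close>

definition blk_s :: "(nat \<Rightarrow> nat) \<Rightarrow> nat \<Rightarrow> nat" where
  "blk_s ms k = (\<Sum>i=1..k. ms i)"

definition mixed_norm ::
  "(nat \<Rightarrow> nat) \<Rightarrow> nat \<Rightarrow> (nat \<Rightarrow> real) \<Rightarrow> real \<Rightarrow> (nat \<Rightarrow> real) \<Rightarrow> real" where
  "mixed_norm ms n rs r v =
     (\<Sum>k=1..n. (\<Sum>j=blk_s ms (k-1)+1..blk_s ms k. \<bar>v j\<bar> powr rs k) powr (r / rs k)) powr (1 / r)"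

end

theory Submission
  imports Defs "HOL-Analysis.Analysis"
begin



lemma holder_fin:
  fixes f g :: "'a \<Rightarrow> real"
  assumes fin: "finite I" and f0: "\<forall>i\<in>I. f i \<ge> 0" and g0: "\<forall>i\<in>I. g i \<ge> 0"
    and p: "p > 1" and q: "q > 1" and pq: "1/p + 1/q = 1"
  shows "(\<Sum>i\<in>I. f i * g i) \<le> (\<Sum>i\<in>I. f i powr p) powr (1/p) * (\<Sum>i\<in>I. g i powr q) powr (1/q)"
proof -
  define A where "A = (\<Sum>i\<in>I. f i powr p)"
  define B where "B = (\<Sum>i\<in>I. g i powr q)"
  have A0: "A \<ge> 0" "B \<ge> 0" unfolding A_def B_def by (auto intro: sum_nonneg)
  show ?thesis
  proof (cases "A = 0 \<or> B = 0")
    case True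
    then have "\<forall>i\<in>I. f i = 0 \<or> g i = 0"
      unfolding A_def B_def using fin f0 g0
      by (subst (asm) sum_nonneg_eq_0_iff, auto)+
    then have "(\<Sum>i\<in>I. f i * g i) = 0" by (intro sum.neutral) auto
    then show ?thesis using True A0 by (auto simp: A_def[symmetric] B_def[symmetric])
  next
    case False
    with A0 have Ap: "A > 0" "B > 0" by auto
    define A' where "A' = A powr (1/p)"
    define B' where "B' = B powr (1/q)"
    have A'p: "A' > 0" "B' > 0" using Ap by (auto simp: A'_def B'_def)
    have A'pow: "A' powr p = A" "B' powr q = B" using Ap p q
      by (auto simp: A'_def B'_def powr_powr)
    have step: "(f i / A') * (g i / B') \<le> f i powr p / (p * A) + g i powr q / (q * B)"
      if "i \<in> I" for i
    proof -
      have "(f i / A') * (g i / B') \<le> (f i / A') powr p / p + (g i / B') powr q / q"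
        by (rule Youngs_inequality) (use p q pq f0 g0 that A'p in auto)
      also have "(f i / A') powr p = f i powr p / A"
        using f0 that A'p by (simp add: powr_divide A'pow)
      also have "(g i / B') powr q = g i powr q / B"
        using g0 that A'p by (simp add: powr_divide A'pow)
      finally show ?thesis by (simp add: mult.commute)
    qed
    have "(\<Sum>i\<in>I. f i * g i) / (A' * B') = (\<Sum>i\<in>I. (f i / A') * (g i / B'))"
      by (simp add: sum_divide_distrib)
    also have "\<dots> \<le> (\<Sum>i\<in>I. f i powr p / (p * A) + g i powr q / (q * B))"
      by (rule sum_mono) (rule step)
    also have "\<dots> = A / (p * A) + B / (q * B)"
      by (simp add: sum.distrib sum_divide_distrib[symmetric] A_def B_def)
    also have "\<dots> = 1" using Ap pq by simp
    finally have "(\<Sum>i\<in>I. f i * g i) \<le> A' * B'" using A'p by (simp add: divide_le_eq)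
    then show ?thesis by (simp add: A'_def B'_def A_def B_def)
  qed
qed



definition blk :: "(nat \<Rightarrow> nat) \<Rightarrow> nat \<Rightarrow> nat set" where
  "blk ms k = {blk_s ms (k-1)+1..blk_s ms k}"

lemma blk_s_Suc: "blk_s ms (Suc k) = blk_s ms k + ms (Suc k)"
  by (simp add: blk_s_def)

lemma blk_sum: "(\<Sum>k=1..n. \<Sum>j\<in>blk ms k. f j) = (\<Sum>j=1..blk_s ms n. f j)"
proof (induction n)
  case 0
  then show ?case by (simp add: blk_s_def)
next
  case (Suc n)
  have "(\<Sum>j=1..blk_s ms (Suc n). f j) = (\<Sum>j=1..blk_s ms n + ms (Suc n). f j)"
    by (simp add: blk_s_Suc)
  also have "\<dots> = (\<Sum>j=1..blk_s ms n. f j) + (\<Sum>j=blk_s ms n + 1..blk_s ms n + ms (Suc n). f j)"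
    by (rule sum.ub_add_nat) simp
  finally show ?case using Suc by (simp add: blk_def blk_s_Suc)
qed

lemma blk_s_mono: "k \<le> k' \<Longrightarrow> blk_s ms k \<le> blk_s ms k'"
  unfolding blk_s_def by (rule sum_mono2) auto

lemma blk_disj: "k \<ge> 1 \<Longrightarrow> k' \<ge> 1 \<Longrightarrow> k \<noteq> k' \<Longrightarrow> blk ms k \<inter> blk ms k' = {}"
proof -
  have *: "blk ms k \<inter> blk ms k' = {}" if "k \<ge> 1" "k < k'" for k k'
  proof -
    have "k \<le> k' - 1" using that by simp
    then have "blk_s ms k \<le> blk_s ms (k'-1)" by (rule blk_s_mono)
    then show ?thesis by (auto simp: blk_def)
  qed
  assume "k \<ge> 1" "k' \<ge> 1" "k \<noteq> k'"
  then show ?thesis using *[of k k'] *[of k' k] by (cases "k < k'") auto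
qed

lemma blk_sub: "k \<in> {1..n} \<Longrightarrow> blk ms k \<subseteq> {1..blk_s ms n}"
  using blk_s_mono[of k n ms] by (auto simp: blk_def)

lemma blk_cover: "j \<in> {1..blk_s ms n} \<Longrightarrow> \<exists>k\<in>{1..n}. j \<in> blk ms k"
proof (induction n)
  case 0
  then show ?case by (simp add: blk_s_def)
next
  case (Suc n)
  show ?case
  proof (cases "j \<le> blk_s ms n")
    case True
    then show ?thesis using Suc by force
  next
    case False
    then have "j \<in> blk ms (Suc n)" using Suc.prems by (auto simp: blk_def)
    then show ?thesis by force
  qed
qed

lemma finite_blk[simp]: "finite (blk ms k)" by (simp add: blk_def)

lemma abs_powr_deriv:
  fixes r :: real
  assumes r: "r > 1"
  shows "((\<lambda>y. \<bar>y\<bar> powr r) has_real_derivative (r * sgn y * \<bar>y\<bar> powr (r - 1))) (at y)"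
proof -
  consider "y > 0" | "y < 0" | "y = 0" by linarith
  then show ?thesis
  proof cases
    case 1
    have ev: "eventually (\<lambda>z. \<bar>z\<bar> powr r = z powr r) (nhds y)"
    proof -
      have "eventually (\<lambda>z. z \<in> {0<..}) (nhds y)" by (rule eventually_nhds_in_open) (use 1 in auto)
      then show ?thesis by eventually_elim auto
    qed
    show ?thesis
      by (subst DERIV_cong_ev[OF refl ev refl]) (use has_real_derivative_powr[OF 1, of r] 1 in simp)
  next
    case 2
    have ev: "eventually (\<lambda>z. \<bar>z\<bar> powr r = (-z) powr r) (nhds y)"
    proof -
      have "eventually (\<lambda>z. z \<in> {..<0}) (nhds y)" by (rule eventually_nhds_in_open) (use 2 in auto)
      then show ?thesis by eventually_elim auto
    qed
    have "((\<lambda>z. (-z) powr r) has_real_derivative (r * (-y) powr (r - 1)) * (-1)) (at y)"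
      using 2 by (intro DERIV_chain2[OF has_real_derivative_powr]) (auto intro!: derivative_eq_intros)
    then show ?thesis
      by (subst DERIV_cong_ev[OF refl ev refl]) (use 2 in simp)
  next
    case 3
    have "((\<lambda>h. (\<bar>0 + h\<bar> powr r - \<bar>0\<bar> powr r) / h) \<longlongrightarrow> 0) (at 0)"
    proof (rule tendsto_norm_zero_cancel)
      have "((\<lambda>h. \<bar>h\<bar> powr (r - 1)) \<longlongrightarrow> \<bar>0\<bar> powr (r - 1)) (at (0::real))"
        using r by (intro tendsto_intros) auto
      then have lim: "((\<lambda>h. \<bar>h\<bar> powr (r - 1)) \<longlongrightarrow> 0) (at (0::real))" by simp
      have "eventually (\<lambda>h. \<bar>h\<bar> powr (r - 1) = norm ((\<bar>0 + h\<bar> powr r - \<bar>0\<bar> powr r) / h)) (at (0::real))"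
        using eventually_at_filter[of "\<lambda>h. h \<noteq> 0"]
        apply (simp add: eventually_at)
        apply (rule exI[of _ 1])
        apply (auto simp: powr_diff)
        done
      then show "((\<lambda>h. norm ((\<bar>0 + h\<bar> powr r - \<bar>0\<bar> powr r) / h)) \<longlongrightarrow> 0) (at (0::real))"
        using tendsto_cong lim by fastforce
    qed
    then show ?thesis using 3 by (simp add: DERIV_def)
  qed
qed


lemma conj_eq: fixes p q :: real assumes "p > 1" "1/p + 1/q = 1" shows "q = p/(p-1)"
proof -
  have "1/q = (p-1)/p" using assms by (simp add: field_simps)
  then have "q = 1 / ((p-1)/p)" by (metis divide_divide_eq_right mult_1 div_by_1 divide_self_if nonzero_mult_div_cancel_left one_divide_eq_0_iff zero_neq_one)
  then show ?thesis by simp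
qed

lemma conj_gt1: fixes p q :: real assumes "p > 1" "1/p + 1/q = 1" shows "q > 1"
proof -
  have "p - 1 > 0" using assms by simp
  then show ?thesis using conj_eq[OF assms] by (simp add: less_divide_eq)
qed

lemma exp_ident:
  fixes p q r s :: real
  assumes "p > 1" "1/p + 1/q = 1" "r > 1" "1/r + 1/s = 1"
  shows "((p/r - 1) * s + 1) * (q / s) = p / r"
proof -
  have h: "p - 1 > 0" "r - 1 > 0" "p > 0" "r > 0" using assms by auto
  have A: "(p/r - 1) * s + 1 = (p - 1)/(r - 1)"
    unfolding conj_eq[OF assms(3,4)] using h by (simp add: field_simps)
  have B: "q / s = (p/(p-1)) * ((r-1)/r)"
    unfolding conj_eq[OF assms(3,4)] conj_eq[OF assms(1,2)] using h by (simp add: field_simps)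
  have "((p/r - 1) * s + 1) * (q / s) = (p - 1)/(r - 1) * ((p/(p-1)) * ((r-1)/r))"
    by (simp only: A B)
  also have "\<dots> = ((p-1)/(p-1)) * ((r-1)/(r-1)) * (p/r)"
    by (simp add: divide_simps mult_ac)
  also have "\<dots> = p / r" using h by simp
  finally show ?thesis .
qed

lemma exp_ident2:
  fixes r s :: real
  assumes "r > 1" "1/r + 1/s = 1"
  shows "(r - 1) * s = r"
  using assms(1) unfolding conj_eq[OF assms] by (simp add: field_simps)

lemma mixed_holder:
  assumes ex: "\<And>k. k\<in>{1..n} \<Longrightarrow> rs k > 1 \<and> ss k > 1 \<and> 1/rs k + 1/ss k = 1"
    and r: "r > 1" "s > 1" "1/r + 1/s = 1"
  shows "(\<Sum>j=1..blk_s ms n. \<bar>u j\<bar> * \<bar>b j\<bar>) \<le> mixed_norm ms n rs r u * mixed_norm ms n ss s b"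
proof -
  define A where "A k = (\<Sum>j\<in>blk ms k. \<bar>u j\<bar> powr rs k) powr (1 / rs k)" for k
  define B where "B k = (\<Sum>j\<in>blk ms k. \<bar>b j\<bar> powr ss k) powr (1 / ss k)" for k
  have "(\<Sum>j=1..blk_s ms n. \<bar>u j\<bar> * \<bar>b j\<bar>) = (\<Sum>k=1..n. \<Sum>j\<in>blk ms k. \<bar>u j\<bar> * \<bar>b j\<bar>)"
    by (rule blk_sum[symmetric])
  also have "\<dots> \<le> (\<Sum>k=1..n. A k * B k)"
    unfolding A_def B_def
    by (rule sum_mono, rule holder_fin) (use ex in auto)
  also have "\<dots> \<le> (\<Sum>k=1..n. A k powr r) powr (1/r) * (\<Sum>k=1..n. B k powr s) powr (1/s)"
    by (rule holder_fin) (use r in \<open>auto simp: A_def B_def\<close>)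
  also have "\<dots> = mixed_norm ms n rs r u * mixed_norm ms n ss s b"
    by (simp add: mixed_norm_def A_def B_def powr_powr blk_def)
  finally show ?thesis .
qed


lemma sgn_abs_mul: "(u::real) * sgn u = \<bar>u\<bar>"
  by (cases "u > 0"; cases "u < 0") auto

lemma abs_mul_powr: "r > 0 \<Longrightarrow> \<bar>u::real\<bar> * \<bar>u\<bar> powr (r - 1) = \<bar>u\<bar> powr r"
  by (simp add: powr_mult_base)

lemma nonneg_mul_powr: "(S::real) \<ge> 0 \<Longrightarrow> S powr (e - 1) * S = S powr e"
  using powr_mult_base[of S "e - 1"] by (simp add: mult.commute)

theorem theorem5p13:
  fixes ms :: "nat \<Rightarrow> nat" and n m :: nat
    and p q :: real and ps qs :: "nat \<Rightarrow> real"
    and x a :: "nat \<Rightarrow> real"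
  assumes hm: "m = blk_s ms n"
    and hp: "p > 1" and hq: "1 / p + 1 / q = 1"
    and hps: "\<And>k. k \<in> {1..n} \<Longrightarrow> ps k > 1"
    and hqs: "\<And>k. k \<in> {1..n} \<Longrightarrow> 1 / ps k + 1 / qs k = 1"
    and ha: "\<exists>j\<in>{1..m}. a j \<noteq> 0"
  defines "W0 \<equiv> {z :: nat \<Rightarrow> real. (\<Sum>i=1..m. a i * z i) = 0 \<and> (\<exists>j\<in>{1..m}. z j \<noteq> 0)}"
  shows "(\<forall>b \<in> W0. \<forall>t::real.
            mixed_norm ms n ps p (\<lambda>j. x j - t * a j) * mixed_norm ms n qs q b
              \<ge> \<bar>\<Sum>j=1..m. x j * b j\<bar>)
       \<and> (W0 \<noteq> {} \<longrightarrow>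
            (\<exists>t0 b0. b0 \<in> W0
               \<and> (\<forall>t::real. mixed_norm ms n ps p (\<lambda>j. x j - t0 * a j)
                        \<le> mixed_norm ms n ps p (\<lambda>j. x j - t * a j))
               \<and> (\<forall>b\<in>W0. \<bar>\<Sum>j=1..m. x j * b j\<bar> / mixed_norm ms n qs q b
                        \<le> \<bar>\<Sum>j=1..m. x j * b0 j\<bar> / mixed_norm ms n qs q b0)
               \<and> mixed_norm ms n ps p (\<lambda>j. x j - t0 * a j)
                   = \<bar>\<Sum>j=1..m. x j * b0 j\<bar> / mixed_norm ms n qs q b0))"
proof -
  have q1: "q > 1" using conj_gt1[OF hp hq] .
  have qs1: "qs k > 1" if "k \<in> {1..n}" for k using conj_gt1[OF hps[OF that] hqs[OF that]] .
  have holder: "(\<Sum>j=1..m. \<bar>u j\<bar> * \<bar>b j\<bar>) \<le> mixed_norm ms n ps p u * mixed_norm ms n qs q b"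
    for u b
    unfolding hm by (rule mixed_holder) (use hps qs1 hqs hp q1 hq in auto)
  have xshift: "(\<Sum>j=1..m. x j * b j) = (\<Sum>j=1..m. (x j - t * a j) * b j)"
    if "(\<Sum>i=1..m. a i * b i) = 0" for b t
  proof -
    have "(\<Sum>j=1..m. (x j - t * a j) * b j) = (\<Sum>j=1..m. x j * b j) - t * (\<Sum>j=1..m. a j * b j)"
      by (simp add: algebra_simps sum_subtractf sum_distrib_left)
    then show ?thesis using that by simp
  qed
  have part1: "\<bar>\<Sum>j=1..m. x j * b j\<bar> \<le> mixed_norm ms n ps p (\<lambda>j. x j - t * a j) * mixed_norm ms n qs q b"
    if "b \<in> W0" for b t
  proof -
    have "\<bar>\<Sum>j=1..m. x j * b j\<bar> = \<bar>\<Sum>j=1..m. (x j - t * a j) * b j\<bar>"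
      using xshift that unfolding W0_def by auto
    also have "\<dots> \<le> (\<Sum>j=1..m. \<bar>x j - t * a j\<bar> * \<bar>b j\<bar>)"
      using sum_abs[of "\<lambda>j. (x j - t * a j) * b j" "{1..m}"] by (simp add: abs_mult)
    also have "\<dots> \<le> mixed_norm ms n ps p (\<lambda>j. x j - t * a j) * mixed_norm ms n qs q b"
      using holder[of "\<lambda>j. x j - t * a j" b] by simp
    finally show ?thesis .
  qed
  have normpos: "mixed_norm ms n qs q b > 0" if "b \<in> W0" for b
  proof -
    from that obtain j where j: "j \<in> {1..m}" "b j \<noteq> 0" unfolding W0_def by auto
    then obtain k where k: "k \<in> {1..n}" "j \<in> blk ms k" using blk_cover hm by blast
    have "0 < \<bar>b j\<bar> powr qs k" using j by simp
    also have "\<dots> \<le> (\<Sum>j\<in>blk ms k. \<bar>b j\<bar> powr qs k)"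
      by (rule member_le_sum) (use k in auto)
    finally have T: "0 < (\<Sum>j\<in>blk ms k. \<bar>b j\<bar> powr qs k)" .
    have "0 < (\<Sum>j\<in>blk ms k. \<bar>b j\<bar> powr qs k) powr (q / qs k)" using T by simp
    also have "\<dots> \<le> (\<Sum>k=1..n. (\<Sum>j\<in>blk ms k. \<bar>b j\<bar> powr qs k) powr (q / qs k))"
      by (rule member_le_sum) (use k in auto)
    finally show ?thesis unfolding mixed_norm_def blk_def by simp
  qed
  have part1': "\<forall>b \<in> W0. \<forall>t::real.
            mixed_norm ms n ps p (\<lambda>j. x j - t * a j) * mixed_norm ms n qs q b
              \<ge> \<bar>\<Sum>j=1..m. x j * b j\<bar>" using part1 by auto
  define S where "S t k = (\<Sum>j\<in>blk ms k. \<bar>x j - t * a j\<bar> powr ps k)" for t k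
  define F where "F t = (\<Sum>k=1..n. S t k powr (p / ps k))" for t
  have S0: "S t k \<ge> 0" for t k unfolding S_def by (auto intro: sum_nonneg)
  have F0: "F t \<ge> 0" for t unfolding F_def by (auto intro: sum_nonneg)
  have G: "mixed_norm ms n ps p (\<lambda>j. x j - t * a j) = F t powr (1/p)" for t
    by (simp add: mixed_norm_def F_def S_def blk_def)
  define c where "c t k j = sgn (x j - t * a j) * \<bar>x j - t * a j\<bar> powr (ps k - 1) * S t k powr (p / ps k - 1)"
    for t k j
  have dblock: "((\<lambda>t. S t k powr (p / ps k)) has_real_derivative (- p * (\<Sum>j\<in>blk ms k. a j * c t k j))) (at t)"
    if k: "k \<in> {1..n}" for k t
  proof (cases "S t k > 0")
    case True
    have pk: "ps k > 1" using hps k by auto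
    have dS: "((\<lambda>t. S t k) has_real_derivative
        (\<Sum>j\<in>blk ms k. ps k * sgn (x j - t * a j) * \<bar>x j - t * a j\<bar> powr (ps k - 1) * (- a j))) (at t)"
      unfolding S_def
      by (rule DERIV_sum, rule DERIV_chain2[OF abs_powr_deriv[OF pk]])
         (auto intro!: derivative_eq_intros)
    have "((\<lambda>t. S t k powr (p / ps k)) has_real_derivative
       (p / ps k) * S t k powr (p / ps k - of_nat 1) *
        (\<Sum>j\<in>blk ms k. ps k * sgn (x j - t * a j) * \<bar>x j - t * a j\<bar> powr (ps k - 1) * (- a j))) (at t)"
      by (rule DERIV_fun_powr[OF dS True])
    moreover have "(p / ps k) * S t k powr (p / ps k - of_nat 1) *
        (\<Sum>j\<in>blk ms k. ps k * sgn (x j - t * a j) * \<bar>x j - t * a j\<bar> powr (ps k - 1) * (- a j))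
        = - p * (\<Sum>j\<in>blk ms k. a j * c t k j)"
      using pk by (simp add: c_def sum_distrib_left sum_negf[symmetric] algebra_simps)
    ultimately show ?thesis by simp
  next
    case False
    then have St: "S t k = 0" using S0[of t k] by simp
    have pk: "ps k > 0" using hps k by force
    have u0: "x j = t * a j" if "j \<in> blk ms k" for j
    proof -
      have "\<forall>j\<in>blk ms k. \<bar>x j - t * a j\<bar> powr ps k = 0"
        using St unfolding S_def by (subst (asm) sum_nonneg_eq_0_iff) auto
      then show ?thesis using that by auto
    qed
    define C where "C = (\<Sum>j\<in>blk ms k. \<bar>a j\<bar> powr ps k) powr (p / ps k)"
    have feq: "S s k powr (p / ps k) = \<bar>s - t\<bar> powr p * C" for s
    proof -
      have "S s k = (\<Sum>j\<in>blk ms k. \<bar>s - t\<bar> powr ps k * \<bar>a j\<bar> powr ps k)"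
        unfolding S_def
      proof (rule sum.cong[OF refl])
        fix j assume "j \<in> blk ms k"
        then have "x j - s * a j = (t - s) * a j" using u0 by (simp add: algebra_simps)
        then show "\<bar>x j - s * a j\<bar> powr ps k = \<bar>s - t\<bar> powr ps k * \<bar>a j\<bar> powr ps k"
          by (simp add: abs_mult powr_mult abs_minus_commute)
      qed
      also have "\<dots> = \<bar>s - t\<bar> powr ps k * (\<Sum>j\<in>blk ms k. \<bar>a j\<bar> powr ps k)"
        by (simp add: sum_distrib_left)
      finally have "S s k powr (p / ps k) = (\<bar>s - t\<bar> powr ps k) powr (p / ps k) * C"
        by (simp add: powr_mult C_def)
      also have "\<dots> = \<bar>s - t\<bar> powr p * C" using pk by (simp add: powr_powr)
      finally show ?thesis .
    qed
    have p1: "p > 1" using hp .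
    have "((\<lambda>s. \<bar>s - t\<bar> powr p * C) has_real_derivative
        (p * sgn (t - t) * \<bar>t - t\<bar> powr (p - 1) * 1) * C) (at t)"
      by (rule DERIV_cmult_right, rule DERIV_chain2[OF abs_powr_deriv[OF p1]])
         (auto intro!: derivative_eq_intros)
    moreover have "c t k j = 0" if "j \<in> blk ms k" for j
      using u0[OF that] by (simp add: c_def)
    ultimately show ?thesis by (simp add: feq)
  qed
  have deriv: "(F has_real_derivative (- p * (\<Sum>k=1..n. \<Sum>j\<in>blk ms k. a j * c t k j))) (at t)" for t
  proof -
    have "((\<lambda>t. \<Sum>k=1..n. S t k powr (p / ps k)) has_real_derivative
       (\<Sum>k=1..n. - p * (\<Sum>j\<in>blk ms k. a j * c t k j))) (at t)"
      by (rule DERIV_sum) (rule dblock, simp)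
    then show ?thesis by (simp add: F_def[abs_def] sum_distrib_left)
  qed
  have contF: "continuous_on UNIV F"
  proof (rule continuous_at_imp_continuous_on, rule ballI)
    fix t show "isCont F t" by (rule DERIV_continuous[OF deriv[of t]])
  qed
  from ha obtain j0 where j0: "j0 \<in> {1..m}" "a j0 \<noteq> 0" by blast
  then obtain k0 where k0: "k0 \<in> {1..n}" "j0 \<in> blk ms k0" using blk_cover hm by blast
  have lowF: "\<bar>x j0 - t * a j0\<bar> powr p \<le> F t" for t
  proof -
    have pk: "ps k0 > 0" using hps k0 by force
    have "\<bar>x j0 - t * a j0\<bar> powr p = (\<bar>x j0 - t * a j0\<bar> powr ps k0) powr (p / ps k0)"
      using pk by (simp add: powr_powr)
    also have "\<dots> \<le> S t k0 powr (p / ps k0)"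
      by (rule powr_mono2) (use hp pk k0 in \<open>auto simp: S_def intro!: member_le_sum\<close>)
    also have "\<dots> \<le> F t" unfolding F_def
      by (rule member_le_sum) (use k0 S0 in auto)
    finally show ?thesis .
  qed
  define t1 where "t1 = x j0 / a j0"
  define R where "R = (F t1 + 1) / \<bar>a j0\<bar>"
  have R0: "R \<ge> 0" using F0[of t1] by (simp add: R_def)
  have cc: "continuous_on (cball t1 R) F" by (rule continuous_on_subset[OF contF]) simp
  have "t1 \<in> cball t1 R" using R0 by simp
  then have cne: "cball t1 R \<noteq> {}" by blast
  obtain t0 where t0: "t0 \<in> cball t1 R" "\<forall>y\<in>cball t1 R. F t0 \<le> F y"
    using continuous_attains_inf[OF compact_cball cne cc] by blast
  have Fmin: "F t0 \<le> F t" for t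
  proof (cases "t \<in> cball t1 R")
    case True
    then show ?thesis using t0 by auto
  next
    case False
    then have "dist t1 t > R" by (simp add: not_le)
    then have "\<bar>t - t1\<bar> > R" by (simp add: dist_real_def abs_minus_commute)
    then have "\<bar>a j0\<bar> * \<bar>t - t1\<bar> > F t1 + 1"
      using j0 by (simp add: R_def divide_less_eq mult.commute)
    moreover have "\<bar>x j0 - t * a j0\<bar> = \<bar>a j0\<bar> * \<bar>t - t1\<bar>"
      using j0 by (simp add: t1_def abs_mult[symmetric] algebra_simps)
    ultimately have u1: "\<bar>x j0 - t * a j0\<bar> > F t1 + 1" by simp
    then have "\<bar>x j0 - t * a j0\<bar> powr 1 \<le> \<bar>x j0 - t * a j0\<bar> powr p"
      using F0[of t1] hp by (intro powr_mono) auto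
    then have "F t1 + 1 < F t" using u1 lowF[of t] by auto
    moreover have "F t0 \<le> F t1" using t0 R0 by auto
    ultimately show ?thesis by simp
  qed
  have crit: "(\<Sum>k=1..n. \<Sum>j\<in>blk ms k. a j * c t0 k j) = 0"
    using DERIV_local_min[OF deriv[of t0], of 1] Fmin hp by auto
  define b0 where "b0 j = (\<Sum>k=1..n. if j \<in> blk ms k then c t0 k j else 0)" for j
  have b0_blk: "b0 j = c t0 k j" if "k \<in> {1..n}" "j \<in> blk ms k" for k j
  proof -
    have "b0 j = (\<Sum>k'=1..n. if k' = k then c t0 k j else 0)"
      unfolding b0_def
    proof (rule sum.cong[OF refl])
      fix k' assume "k' \<in> {1..n}"
      then show "(if j \<in> blk ms k' then c t0 k' j else 0) = (if k' = k then c t0 k j else 0)"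
        using blk_disj[of k' k ms] that by auto
    qed
    then show ?thesis using that by simp
  qed
  have blk_cong: "(\<Sum>k=1..n. \<Sum>j\<in>blk ms k. f j * b0 j) = (\<Sum>k=1..n. \<Sum>j\<in>blk ms k. f j * c t0 k j)" for f
    by (intro sum.cong refl) (simp add: b0_blk)
  have sumab0: "(\<Sum>j=1..m. a j * b0 j) = 0"
    using crit blk_cong[of a] blk_sum[where n=n and ms=ms and f="\<lambda>j. a j * b0 j"] hm by simp
  define u where "u j = x j - t0 * a j" for j
  have ub0: "(\<Sum>j=1..m. u j * b0 j) = F t0"
  proof -
    have "(\<Sum>j=1..m. u j * b0 j) = (\<Sum>k=1..n. \<Sum>j\<in>blk ms k. u j * c t0 k j)"
      using blk_cong[of u] blk_sum[where n=n and ms=ms and f="\<lambda>j. u j * b0 j"] hm by simp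
    also have "\<dots> = (\<Sum>k=1..n. S t0 k powr (p / ps k))"
    proof (rule sum.cong[OF refl])
      fix k assume k: "k \<in> {1..n}"
      have pk: "ps k > 0" using hps k by force
      have "(\<Sum>j\<in>blk ms k. u j * c t0 k j) = (\<Sum>j\<in>blk ms k. S t0 k powr (p / ps k - 1) * (\<bar>u j\<bar> * \<bar>u j\<bar> powr (ps k - 1)))"
        by (intro sum.cong refl) (simp add: c_def u_def[symmetric] sgn_abs_mul[symmetric] mult_ac)
      also have "\<dots> = S t0 k powr (p / ps k - 1) * S t0 k"
        by (simp add: abs_mul_powr[OF pk] sum_distrib_left S_def u_def)
      also have "\<dots> = S t0 k powr (p / ps k)" by (rule nonneg_mul_powr[OF S0])
      finally show "(\<Sum>j\<in>blk ms k. u j * c t0 k j) = S t0 k powr (p / ps k)" .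
    qed
    finally show ?thesis by (simp add: F_def)
  qed
  have nb0: "mixed_norm ms n qs q b0 = F t0 powr (1/q)"
  proof -
    have "(\<Sum>j\<in>blk ms k. \<bar>b0 j\<bar> powr qs k) powr (q / qs k) = S t0 k powr (p / ps k)"
      if k: "k \<in> {1..n}" for k
    proof -
      have pk: "ps k > 1" using hps k by force
      have qk: "qs k > 1" using qs1 k by force
      have eb: "\<bar>b0 j\<bar> powr qs k = \<bar>u j\<bar> powr ps k * S t0 k powr ((p / ps k - 1) * qs k)"
        if j: "j \<in> blk ms k" for j
      proof -
        have "\<bar>b0 j\<bar> = \<bar>u j\<bar> powr (ps k - 1) * S t0 k powr (p / ps k - 1)"
          using b0_blk[OF k j] by (cases "u j = 0") (auto simp: c_def u_def[symmetric] abs_mult)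
        then have "\<bar>b0 j\<bar> powr qs k = \<bar>u j\<bar> powr ((ps k - 1) * qs k) * S t0 k powr ((p / ps k - 1) * qs k)"
          by (simp add: powr_mult powr_powr)
        then show ?thesis using exp_ident2[OF pk hqs[OF k]] by simp
      qed
      have "(\<Sum>j\<in>blk ms k. \<bar>b0 j\<bar> powr qs k) = S t0 k powr ((p / ps k - 1) * qs k) * S t0 k"
        by (simp add: eb sum_distrib_right[symmetric] S_def u_def mult.commute)
      also have "\<dots> = S t0 k powr ((p / ps k - 1) * qs k + 1)"
        using nonneg_mul_powr[OF S0, of t0 k "(p / ps k - 1) * qs k + 1"] by simp
      finally have "(\<Sum>j\<in>blk ms k. \<bar>b0 j\<bar> powr qs k) powr (q / qs k)
           = S t0 k powr (((p / ps k - 1) * qs k + 1) * (q / qs k))"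
        by (simp add: powr_powr)
      also have "\<dots> = S t0 k powr (p / ps k)"
        using exp_ident[OF hp hq pk hqs[OF k]] by simp
      finally show ?thesis .
    qed
    then have E: "(\<Sum>k=1..n. (\<Sum>j\<in>blk ms k. \<bar>b0 j\<bar> powr qs k) powr (q / qs k)) = F t0"
      unfolding F_def by (intro sum.cong refl) auto
    then show ?thesis unfolding mixed_norm_def blk_def[symmetric] by simp
  qed
  have Gmin: "\<forall>t. mixed_norm ms n ps p (\<lambda>j. x j - t0 * a j) \<le> mixed_norm ms n ps p (\<lambda>j. x j - t * a j)"
    using Fmin F0 hp by (auto simp: G intro!: powr_mono2)
  have main: "\<exists>b0. b0 \<in> W0 \<and> mixed_norm ms n ps p (\<lambda>j. x j - t0 * a j)
                   = \<bar>\<Sum>j=1..m. x j * b0 j\<bar> / mixed_norm ms n qs q b0" if ne: "W0 \<noteq> {}"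
  proof (cases "\<exists>j\<in>{1..m}. u j \<noteq> 0")
    case True
    then obtain j where j: "j \<in> {1..m}" "u j \<noteq> 0" by blast
    then obtain k where k: "k \<in> {1..n}" "j \<in> blk ms k" using blk_cover hm by blast
    have "0 < \<bar>u j\<bar> powr ps k" using j by simp
    also have "\<dots> \<le> S t0 k" unfolding S_def u_def[symmetric]
      by (rule member_le_sum) (use k in auto)
    finally have Sp: "S t0 k > 0" .
    have "b0 j \<noteq> 0" using b0_blk[OF k] Sp j by (simp add: c_def u_def[symmetric] sgn_if)
    then have W: "b0 \<in> W0" using sumab0 j unfolding W0_def by auto
    have "\<bar>\<Sum>j=1..m. x j * b0 j\<bar> = F t0"
      using xshift[OF sumab0, of t0] ub0 F0[of t0] by (simp add: u_def)
    then have "\<bar>\<Sum>j=1..m. x j * b0 j\<bar> / mixed_norm ms n qs q b0 = F t0 powr 1 / F t0 powr (1/q)"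
      using nb0 F0[of t0] by simp
    also have "\<dots> = F t0 powr (1/p)"
    proof -
      have e: "1/p = 1 - 1/q" using hq by simp
      show ?thesis unfolding e by (rule powr_diff[symmetric])
    qed
    finally show ?thesis using W G by auto
  next
    case False
    from ne obtain b1 where b1: "b1 \<in> W0" by blast
    have "mixed_norm ms n ps p (\<lambda>j. x j - t0 * a j) \<le> 0"
    proof -
      have "S t0 k = 0" if "k \<in> {1..n}" for k
        unfolding S_def u_def[symmetric] using False blk_sub[OF that, of ms] hm
        by (intro sum.neutral) auto
      then show ?thesis by (simp add: G F_def)
    qed
    moreover have "\<bar>\<Sum>j=1..m. x j * b1 j\<bar> = 0"
      using xshift[of b1 t0] b1 False unfolding W0_def u_def by auto
    ultimately show ?thesis using b1
      by (metis G F0 div_0 order_antisym powr_ge_zero)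
  qed
  show ?thesis
  proof (intro conjI impI part1')
    assume ne: "W0 \<noteq> {}"
    from main[OF ne] obtain b0 where b0: "b0 \<in> W0" "mixed_norm ms n ps p (\<lambda>j. x j - t0 * a j)
                   = \<bar>\<Sum>j=1..m. x j * b0 j\<bar> / mixed_norm ms n qs q b0" by blast
    have "\<forall>b\<in>W0. \<bar>\<Sum>j=1..m. x j * b j\<bar> / mixed_norm ms n qs q b
                        \<le> \<bar>\<Sum>j=1..m. x j * b0 j\<bar> / mixed_norm ms n qs q b0"
    proof
      fix b assume b: "b \<in> W0"
      show "\<bar>\<Sum>j=1..m. x j * b j\<bar> / mixed_norm ms n qs q b
                        \<le> \<bar>\<Sum>j=1..m. x j * b0 j\<bar> / mixed_norm ms n qs q b0"
        using part1[OF b, of t0] normpos[OF b] b0(2) by (simp add: divide_le_eq)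
    qed
    then show "\<exists>t0 b0. b0 \<in> W0
               \<and> (\<forall>t::real. mixed_norm ms n ps p (\<lambda>j. x j - t0 * a j)
                        \<le> mixed_norm ms n ps p (\<lambda>j. x j - t * a j))
               \<and> (\<forall>b\<in>W0. \<bar>\<Sum>j=1..m. x j * b j\<bar> / mixed_norm ms n qs q b
                        \<le> \<bar>\<Sum>j=1..m. x j * b0 j\<bar> / mixed_norm ms n qs q b0)
               \<and> mixed_norm ms n ps p (\<lambda>j. x j - t0 * a j)
                   = \<bar>\<Sum>j=1..m. x j * b0 j\<bar> / mixed_norm ms n qs q b0"
      using b0 Gmin by blast
  qed
qed

end
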